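(* Consider a solution $(\Sigma_+,\mathcal{R}_1,\mathcal{R}_2,M,\psi,v)$, defined for all $\tau\ge\tau_0$, of the system \begin{align*} \Sigma_+' &= -(1-\Sigma_+^2)\Sigma_+ - \mathcal{R}_1 + (1+\Sigma_+)\mathcal{R}_2\cos 2\psi - \frac{4\Omega v^2}{3+v^2},\\ \mathcal{R}_1' &= 2\big[(1+\Sigma_+)\Sigma_+ + \mathcal{R}_2\cos 2\psi\big]\mathcal{R}_1 - 2(1+\Sigma_+)(\cos 2\psi)\mathcal{R}_2,\\ \mathcal{R}_2' &= 2\big[(1+\Sigma_+)\Sigma_+ + \mathcal{R}_2\cos 2\psi\big]\mathcal{R}_2 - 2(1+\Sigma_+)(\cos 2\psi)\mathcal{R}_1,\\ M' &= -\big[(1+\Sigma_+)^2 + \mathcal{R}_2\cos 2\psi + 3\mathcal{R}_2 M\sin 2\psi\big]M,\\ \psi' &= \frac{2}{M} + (1+\Sigma_+)\frac{\mathcal{R}_1}{\mathcal{R}_2}\sin 2\psi,\\ v' &= \frac{6}{3-v^2}\Sigma_+(1-v^2)v, \end{align*} with constraint $\mathcal{R}_1^2-\mathcal{R}_2^2-\left(\frac{4\Omega v}{3+v^2}\right)^2=0$, where $\Omega:=1-\Sigma_+^2-\mathcal{R}_1$ (so that $\Omega'=2\big[\Sigma_+^2+\mathcal{R}_2\cos2\psi+\frac{4v^2}{3+v^2}\Sigma_+\big]\Omega$). Then it is not possible that both \[ \lim_{\tau\to+\infty}\Omega=0\quad\text{and}\quad \lim_{\tau\to+\infty}\Sigma_+=\alpha\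 \text{ for some } 0\le\alpha<1. \]
   Context: This system describes spatially homogeneous Bianchi type VII$_0$ cosmologies with a tilted irrotational radiation perfect fluid, zero cosmological constant, in Hubble-normalized variables with dimensionless time $\tau$; $'$ denotes $d/d\tau$. Here $\mathcal{R}_1,\mathcal{R}_2,\psi$ are rotation-invariant combinations of Hubble-normalized shear and curvature components with $\mathcal{R}_1>0$, $\mathcal{R}_2>0$, and $M=1/N_+$ with $N_+$ a Hubble-normalized spatial curvature variable; for these cosmologies it is a known standing fact, used by the paper, that $M\to0$ as $\tau\to+\infty$. *)

theory Defs
  imports Complex_Main
begin

definition Omega_of :: "real \<Rightarrow> real \<Rightarrow> real" where
  "Omega_of Sp R1 = 1 - Sp\<^sup>2 - R1"

end

theory Submission
  imports Defs
begin

lemma Bfun_tendsto_real: "(f \<longlongrightarrow> (l::real)) F \<Longrightarrow> Bfun f F"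
  unfolding Bfun_metric_def
proof -
  assume "(f \<longlongrightarrow> l) F"
  then have "eventually (\<lambda>x. dist (f x) l < 1) F" by (rule tendstoD) simp
  then have "eventually (\<lambda>x. dist (f x) l \<le> 1) F" by (auto elim: eventually_mono)
  then show "\<exists>y. \<exists>K>0. eventually (\<lambda>x. dist (f x) y \<le> K) F" by (intro exI[of _ l] exI[of _ 1]) auto
qed

lemma Bfun_bound_real: "eventually (\<lambda>x. \<bar>f x\<bar> \<le> (K::real)) F \<Longrightarrow> Bfun f F"
  unfolding Bfun_def
  by (rule exI[of _ "max K 1"]) (auto elim: eventually_mono)

lemma Bfun_add_real:
  assumes "Bfun (f::_\<Rightarrow>real) F" "Bfun g F" shows "Bfun (\<lambda>x. f x + g x) F"
proof -
  from assms obtain K1 K2 where "K1 > 0" "K2 > 0" and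
    e1: "eventually (\<lambda>x. norm (f x) \<le> K1) F" and e2: "eventually (\<lambda>x. norm (g x) \<le> K2) F"
    unfolding Bfun_def by blast
  from e1 e2 have "eventually (\<lambda>x. \<bar>f x + g x\<bar> \<le> K1 + K2) F"
    by eventually_elim auto
  then show ?thesis by (rule Bfun_bound_real)
qed

lemma Bfun_mult_real:
  assumes "Bfun (f::_\<Rightarrow>real) F" "Bfun g F" shows "Bfun (\<lambda>x. f x * g x) F"
proof -
  from assms obtain K1 K2 where "K1 > 0" "K2 > 0" and
    e1: "eventually (\<lambda>x. norm (f x) \<le> K1) F" and e2: "eventually (\<lambda>x. norm (g x) \<le> K2) F"
    unfolding Bfun_def by blast
  from e1 e2 have "eventually (\<lambda>x. \<bar>f x * g x\<bar> \<le> K1 * K2) F"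
    by eventually_elim (auto simp: abs_mult intro!: mult_mono)
  then show ?thesis by (rule Bfun_bound_real)
qed

lemma Bfun_minus_real:
  assumes "Bfun (f::_\<Rightarrow>real) F" shows "Bfun (\<lambda>x. - f x) F"
  using assms unfolding Bfun_def by simp

lemma Bfun_diff_real:
  assumes "Bfun (f::_\<Rightarrow>real) F" "Bfun g F" shows "Bfun (\<lambda>x. f x - g x) F"
  using Bfun_add_real[OF assms(1) Bfun_minus_real[OF assms(2)]] by simp

lemma Bfun_divc_real:
  assumes "Bfun (f::_\<Rightarrow>real) F" shows "Bfun (\<lambda>x. f x / c) F"
  using Bfun_mult_real[OF assms Bfun_const[of "1/c"]] by simp

lemma Bfun_pow2_real:
  assumes "Bfun (f::_\<Rightarrow>real) F" shows "Bfun (\<lambda>x. (f x)\<^sup>2) F"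
  using Bfun_mult_real[OF assms assms] by (simp add: power2_eq_square)

lemma tendsto_zero_Bfun_real:
  assumes "(f \<longlongrightarrow> 0) F" "Bfun g F" shows "((\<lambda>x. f x * (g x::real)) \<longlongrightarrow> 0) F"
  using bounded_bilinear.Zfun_prod_Bfun[OF bounded_bilinear_mult, of f F g] assms
  by (simp add: tendsto_Zfun_iff)

lemma at_deriv:
  assumes "t > (a::real)" "(f has_real_derivative d) (at t within {a..})"
  shows "(f has_real_derivative d) (at t)"
proof -
  have "(f has_real_derivative d) (at t within {a<..})"
    using assms(2) by (rule DERIV_subset) auto
  moreover have "at t within {a<..} = at t" using assms(1) by (intro at_within_open) auto
  ultimately show ?thesis by simp
qed

lemmas Bfun_intros = Bfun_add_real Bfun_mult_real Bfun_minus_real Bfun_diff_real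
  Bfun_divc_real Bfun_pow2_real Bfun_const


theorem lemma2:
  fixes Sp R1 R2 M psi v :: "real \<Rightarrow> real" and \<tau>0 :: real
  assumes dSp: "\<And>t. t \<ge> \<tau>0 \<Longrightarrow> (Sp has_real_derivative
      (-(1 - (Sp t)\<^sup>2) * Sp t - R1 t + (1 + Sp t) * R2 t * cos (2 * psi t)
       - 4 * Omega_of (Sp t) (R1 t) * (v t)\<^sup>2 / (3 + (v t)\<^sup>2))) (at t within {\<tau>0..})"
    and dR1: "\<And>t. t \<ge> \<tau>0 \<Longrightarrow> (R1 has_real_derivative
      (2 * ((1 + Sp t) * Sp t + R2 t * cos (2 * psi t)) * R1 t
       - 2 * (1 + Sp t) * cos (2 * psi t) * R2 t)) (at t within {\<tau>0..})"
    and dR2: "\<And>t. t \<ge> \<tau>0 \<Longrightarrow> (R2 has_real_derivative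
      (2 * ((1 + Sp t) * Sp t + R2 t * cos (2 * psi t)) * R2 t
       - 2 * (1 + Sp t) * cos (2 * psi t) * R1 t)) (at t within {\<tau>0..})"
    and dM: "\<And>t. t \<ge> \<tau>0 \<Longrightarrow> (M has_real_derivative
      (-((1 + Sp t)\<^sup>2 + R2 t * cos (2 * psi t) + 3 * R2 t * M t * sin (2 * psi t)) * M t))
      (at t within {\<tau>0..})"
    and dpsi: "\<And>t. t \<ge> \<tau>0 \<Longrightarrow> (psi has_real_derivative
      (2 / M t + (1 + Sp t) * (R1 t / R2 t) * sin (2 * psi t))) (at t within {\<tau>0..})"
    and dv: "\<And>t. t \<ge> \<tau>0 \<Longrightarrow> (v has_real_derivative
      (6 / (3 - (v t)\<^sup>2) * Sp t * (1 - (v t)\<^sup>2) * v t)) (at t within {\<tau>0..})"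
    and constraint: "\<And>t. t \<ge> \<tau>0 \<Longrightarrow>
      (R1 t)\<^sup>2 - (R2 t)\<^sup>2 - (4 * Omega_of (Sp t) (R1 t) * v t / (3 + (v t)\<^sup>2))\<^sup>2 = 0"
    and R1_pos: "\<And>t. t \<ge> \<tau>0 \<Longrightarrow> R1 t > 0"
    and R2_pos: "\<And>t. t \<ge> \<tau>0 \<Longrightarrow> R2 t > 0"
    and M_pos: "\<And>t. t \<ge> \<tau>0 \<Longrightarrow> M t > 0"
    and M_lim: "(M \<longlongrightarrow> 0) at_top"
  shows "\<not> (((\<lambda>t. Omega_of (Sp t) (R1 t)) \<longlongrightarrow> 0) at_top \<and>
             (\<exists>\<alpha>. 0 \<le> \<alpha> \<and> \<alpha> < 1 \<and> (Sp \<longlongrightarrow> \<alpha>) at_top))"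
proof
  assume H: "((\<lambda>t. Omega_of (Sp t) (R1 t)) \<longlongrightarrow> 0) at_top \<and>
             (\<exists>\<alpha>. 0 \<le> \<alpha> \<and> \<alpha> < 1 \<and> (Sp \<longlongrightarrow> \<alpha>) at_top)"
  then obtain \<alpha> where a0: "0 \<le> \<alpha>" and a1: "\<alpha> < 1" and Sp_lim: "(Sp \<longlongrightarrow> \<alpha>) at_top"
    by blast
  define Om where "Om t = Omega_of (Sp t) (R1 t)" for t
  have Om_lim: "(Om \<longlongrightarrow> 0) at_top" using H unfolding Om_def by blast
  have R1_eq: "R1 t = 1 - (Sp t)\<^sup>2 - Om t" for t unfolding Om_def Omega_of_def by simp
  have R1_lim: "(R1 \<longlongrightarrow> 1 - \<alpha>\<^sup>2) at_top"
  proof -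
    have "((\<lambda>t. 1 - (Sp t)\<^sup>2 - Om t) \<longlongrightarrow> 1 - \<alpha>\<^sup>2 - 0) at_top"
      by (intro tendsto_intros Sp_lim Om_lim)
    moreover have "(\<lambda>t. 1 - (Sp t)\<^sup>2 - Om t) = R1" using R1_eq by auto
    ultimately show ?thesis by simp
  qed
  define q where "q t = 4 * Om t * v t / (3 + (v t)\<^sup>2)" for t
  have vbound: "\<bar>4 * v t / (3 + (v t)\<^sup>2)\<bar> \<le> 4" for t
  proof -
    have pos: "3 + (v t)\<^sup>2 > 0" by (simp add: add_pos_nonneg)
    have "\<bar>v t\<bar> \<le> 3 + (v t)\<^sup>2"
    proof (cases "\<bar>v t\<bar> \<le> 1")
      case True then show ?thesis by (simp add: add_increasing2)
    next
      case False
      then have "\<bar>v t\<bar> * 1 \<le> \<bar>v t\<bar> * \<bar>v t\<bar>" by (intro mult_left_mono) auto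
      then show ?thesis by (simp add: power2_eq_square abs_mult_self_eq)
    qed
    then show ?thesis using pos by (simp add: abs_div divide_le_eq abs_mult)
  qed
  have q_lim: "(q \<longlongrightarrow> 0) at_top"
  proof -
    have "((\<lambda>t. Om t * (4 * v t / (3 + (v t)\<^sup>2))) \<longlongrightarrow> 0) at_top"
      by (rule tendsto_zero_Bfun_real[OF Om_lim Bfun_bound_real[of _ 4]]) (rule always_eventually, use vbound in blast)
    then show ?thesis unfolding q_def by (simp add: ac_simps)
  qed
  have R2_eq: "R2 t = sqrt ((R1 t)\<^sup>2 - (q t)\<^sup>2)" if "t \<ge> \<tau>0" for t
  proof -
    have "(R2 t)\<^sup>2 = (R1 t)\<^sup>2 - (q t)\<^sup>2" using constraint[OF that] unfolding q_def Om_def by simp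
    moreover have "sqrt ((R2 t)\<^sup>2) = R2 t" using R2_pos[OF that] by simp
    ultimately show ?thesis by simp
  qed
  have R2_lim: "(R2 \<longlongrightarrow> 1 - \<alpha>\<^sup>2) at_top"
  proof -
    have "((\<lambda>t. sqrt ((R1 t)\<^sup>2 - (q t)\<^sup>2)) \<longlongrightarrow> sqrt ((1 - \<alpha>\<^sup>2)\<^sup>2 - 0\<^sup>2)) at_top"
      by (intro tendsto_intros R1_lim q_lim)
    moreover have "sqrt ((1 - \<alpha>\<^sup>2)\<^sup>2 - 0\<^sup>2) = 1 - \<alpha>\<^sup>2"
    proof -
      have "\<alpha>\<^sup>2 \<le> 1" using a0 a1 by (simp add: abs_square_le_1)
      then show ?thesis by simp
    qed
    moreover have "eventually (\<lambda>t. sqrt ((R1 t)\<^sup>2 - (q t)\<^sup>2) = R2 t) at_top"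
      using eventually_ge_at_top[of \<tau>0] by eventually_elim (simp add: R2_eq)
    then have "((\<lambda>t. sqrt ((R1 t)\<^sup>2 - (q t)\<^sup>2)) \<longlongrightarrow> 1 - \<alpha>\<^sup>2) at_top = (R2 \<longlongrightarrow> 1 - \<alpha>\<^sup>2) at_top"
      by (rule tendsto_cong)
    ultimately show ?thesis by simp
  qed
  define c where "c t = cos (2 * psi t)" for t
  define s where "s t = sin (2 * psi t)" for t
  define w where "w t = (v t)\<^sup>2 / (3 + (v t)\<^sup>2)" for t
  have Bc: "Bfun c at_top" by (rule Bfun_bound_real[of _ 1]) (simp add: c_def)
  have Bs: "Bfun s at_top" by (rule Bfun_bound_real[of _ 1]) (simp add: s_def)
  have Bw: "Bfun w at_top"
  proof (rule Bfun_bound_real[of _ 1], rule always_eventually, rule allI)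
    fix t
    have pos: "3 + (v t)\<^sup>2 > 0" by (simp add: add_pos_nonneg)
    then show "\<bar>w t\<bar> \<le> 1" unfolding w_def by (simp add: divide_le_eq)
  qed
  have BSp: "Bfun Sp at_top" by (rule Bfun_tendsto_real[OF Sp_lim])
  have BR1: "Bfun R1 at_top" by (rule Bfun_tendsto_real[OF R1_lim])
  have BR2: "Bfun R2 at_top" by (rule Bfun_tendsto_real[OF R2_lim])
  have BM: "Bfun M at_top" by (rule Bfun_tendsto_real[OF M_lim])
  have BOm: "Bfun Om at_top" by (rule Bfun_tendsto_real[OF Om_lim])
  define Sd where "Sd t = -(1 - (Sp t)\<^sup>2) * Sp t - R1 t + (1 + Sp t) * R2 t * cos (2 * psi t)
       - 4 * Omega_of (Sp t) (R1 t) * (v t)\<^sup>2 / (3 + (v t)\<^sup>2)" for t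
  define R2d where "R2d t = 2 * ((1 + Sp t) * Sp t + R2 t * cos (2 * psi t)) * R2 t
       - 2 * (1 + Sp t) * cos (2 * psi t) * R1 t" for t
  define Md where "Md t = -((1 + Sp t)\<^sup>2 + R2 t * cos (2 * psi t) + 3 * R2 t * M t * sin (2 * psi t)) * M t" for t
  define psid where "psid t = 2 / M t + (1 + Sp t) * (R1 t / R2 t) * sin (2 * psi t)" for t
  define Pd where "Pd t = ((0 + Sd t) * R2 t + R2d t * (1 + Sp t)) * M t + Md t * ((1 + Sp t) * R2 t)" for t
  define Gr where "Gr t = Sd t - (Pd t * sin (2 * psi t) + cos (2 * psi t) * (2 * psid t) * ((1 + Sp t) * R2 t * M t)) / 4" for t
  define F where "F t = Sp t - (1 + Sp t) * R2 t * M t * sin (2 * psi t) / 4" for t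
  have dF: "(F has_real_derivative Gr t) (at t)" if "t > \<tau>0" for t
  proof -
    have t0: "t \<ge> \<tau>0" using that by simp
    have d1: "(Sp has_real_derivative Sd t) (at t)"
      using at_deriv[OF that dSp[OF t0]] unfolding Sd_def .
    have d2: "(R2 has_real_derivative R2d t) (at t)"
      using at_deriv[OF that dR2[OF t0]] unfolding R2d_def .
    have d3: "(M has_real_derivative Md t) (at t)"
      using at_deriv[OF that dM[OF t0]] unfolding Md_def .
    have d4: "(psi has_real_derivative psid t) (at t)"
      using at_deriv[OF that dpsi[OF t0]] unfolding psid_def .
    have d5: "((\<lambda>t. sin (2 * psi t)) has_real_derivative (cos (2 * psi t) * (2 * psid t))) (at t)"
      by (rule DERIV_chain2[OF DERIV_sin DERIV_cmult[OF d4, of 2]])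
    have d6: "((\<lambda>t. (1 + Sp t) * R2 t * M t) has_real_derivative Pd t) (at t)"
      unfolding Pd_def by (rule DERIV_mult[OF DERIV_mult[OF DERIV_add[OF DERIV_const[of 1] d1] d2] d3])
    have d7: "((\<lambda>t. (1 + Sp t) * R2 t * M t * sin (2 * psi t)) has_real_derivative
        (Pd t * sin (2 * psi t) + cos (2 * psi t) * (2 * psid t) * ((1 + Sp t) * R2 t * M t))) (at t)"
      by (rule DERIV_mult[OF d6 d5])
    show ?thesis unfolding F_def Gr_def
      by (rule DERIV_diff[OF d1 DERIV_cdivide[OF d7, of 4]])
  qed
  define Sdc where "Sdc t = -(1 - (Sp t)\<^sup>2) * Sp t - R1 t + (1 + Sp t) * R2 t * c t - 4 * Om t * w t" for t
  define R2dc where "R2dc t = 2 * ((1 + Sp t) * Sp t + R2 t * c t) * R2 t - 2 * (1 + Sp t) * c t * R1 t" for t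
  define Mq where "Mq t = -((1 + Sp t)\<^sup>2 + R2 t * c t + 3 * R2 t * M t * s t)" for t
  define Q where "Q t = Sdc t * R2 t + R2dc t * (1 + Sp t) + Mq t * ((1 + Sp t) * R2 t)" for t
  define B where "B t = -(Q t * s t / 4) - (1 + Sp t)\<^sup>2 * R1 t * c t * s t / 2" for t
  define A where "A t = -(1 - (Sp t)\<^sup>2) * Sp t - R1 t" for t
  define C where "C t = -4 * w t" for t
  have Gr_eq: "Gr t = A t + M t * B t + Om t * C t" if "t \<ge> \<tau>0" for t
  proof -
    have Mne: "M t \<noteq> 0" using M_pos[OF that] by simp
    have R2ne: "R2 t \<noteq> 0" using R2_pos[OF that] by simp
    have e1: "Sd t = Sdc t" unfolding Sd_def Sdc_def c_def w_def Om_def by simp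
    have e2: "R2d t = R2dc t" unfolding R2d_def R2dc_def c_def by simp
    have e3: "Md t = Mq t * M t" unfolding Md_def Mq_def c_def s_def by simp
    have e4: "Pd t = M t * Q t" unfolding Pd_def Q_def e1 e2 e3 by (simp add: algebra_simps)
    have e5: "cos (2 * psi t) * (2 * psid t) * ((1 + Sp t) * R2 t * M t)
        = 4 * (1 + Sp t) * R2 t * c t + 2 * (1 + Sp t)\<^sup>2 * R1 t * M t * c t * s t"
      unfolding psid_def c_def s_def using Mne R2ne
      by (simp add: field_simps power2_eq_square)
    have "Gr t = Sdc t - (M t * Q t * s t + (4 * (1 + Sp t) * R2 t * c t + 2 * (1 + Sp t)\<^sup>2 * R1 t * M t * c t * s t)) / 4"
      unfolding Gr_def e5 e4 e1 s_def by simp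
    also have "\<dots> = A t + M t * B t + Om t * C t"
      unfolding Sdc_def A_def B_def C_def by (simp add: field_simps)
    finally show ?thesis .
  qed
  define L where "L = -(1 - \<alpha>\<^sup>2) * \<alpha> - (1 - \<alpha>\<^sup>2)"
  have L_neg: "L < 0"
  proof -
    have "\<alpha>\<^sup>2 < 1" using a0 a1 by (simp add: power_less_one_iff abs_square_less_1)
    then have "0 < (1 - \<alpha>\<^sup>2) * (\<alpha> + 1)" using a0 by (intro mult_pos_pos) auto
    then show ?thesis unfolding L_def by (simp add: algebra_simps)
  qed
  have BB: "Bfun B at_top"
    unfolding B_def Q_def Sdc_def R2dc_def Mq_def
    by (intro Bfun_intros BSp BR1 BR2 BM BOm Bc Bs Bw)
  have BC: "Bfun C at_top" unfolding C_def by (intro Bfun_intros Bw)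
  have "((\<lambda>t. A t + M t * B t + Om t * C t) \<longlongrightarrow> L + 0 + 0) at_top"
    unfolding A_def L_def
    by (intro tendsto_intros Sp_lim R1_lim tendsto_zero_Bfun_real[OF M_lim BB] tendsto_zero_Bfun_real[OF Om_lim BC])
  moreover have "eventually (\<lambda>t. A t + M t * B t + Om t * C t = Gr t) at_top"
    using eventually_ge_at_top[of \<tau>0] by eventually_elim (simp add: Gr_eq)
  ultimately have Gr_lim: "(Gr \<longlongrightarrow> L) at_top" using tendsto_cong by force
  have "((\<lambda>t. Sp t - M t * ((1 + Sp t) * R2 t * s t / 4)) \<longlongrightarrow> \<alpha> - 0) at_top"
    by (intro tendsto_intros Sp_lim tendsto_zero_Bfun_real[OF M_lim] Bfun_intros BSp BR2 Bs)
  moreover have "(\<lambda>t. Sp t - M t * ((1 + Sp t) * R2 t * s t / 4)) = F"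
    by (rule ext) (simp add: F_def s_def mult_ac)
  ultimately have F_lim: "(F \<longlongrightarrow> \<alpha>) at_top" by simp
  have ev1: "eventually (\<lambda>t. Gr t < L / 2) at_top"
    by (rule order_tendstoD(2)[OF Gr_lim]) (use L_neg in simp)
  have ev2: "eventually (\<lambda>t. F t > \<alpha> - 1) at_top"
    by (rule order_tendstoD(1)[OF F_lim]) simp
  from eventually_conj[OF ev1 ev2] obtain N where N: "\<And>t. t \<ge> N \<Longrightarrow> Gr t < L / 2 \<and> F t > \<alpha> - 1"
    by (auto simp: eventually_at_top_linorder)
  define T where "T = max N (\<tau>0 + 1)"
  define K where "K x = F x - L / 2 * x" for x
  define X where "X = 2 * (\<bar>F T\<bar> + \<bar>\<alpha>\<bar> + 2) / (- L)"
  have Xpos: "X > 0" unfolding X_def using L_neg by (intro divide_pos_pos) auto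
  have LX: "L / 2 * X = - (\<bar>F T\<bar> + \<bar>\<alpha>\<bar> + 2)" unfolding X_def using L_neg by (simp add: field_simps)
  define t where "t = T + X"
  have "K t \<le> K T"
  proof (rule DERIV_nonpos_imp_nonincreasing[of T t K])
    show "T \<le> t" unfolding t_def using Xpos by simp
  next
    fix x assume x: "T \<le> x" "x \<le> t"
    then have xt0: "x > \<tau>0" unfolding T_def by simp
    have "(K has_real_derivative Gr x - L / 2 * 1) (at x)"
      unfolding K_def by (intro DERIV_diff dF[OF xt0] DERIV_cmult DERIV_ident)
    moreover have "Gr x - L / 2 * 1 \<le> 0" using N[of x] x unfolding T_def by simp
    ultimately show "\<exists>y. (K has_real_derivative y) (at x) \<and> y \<le> 0" by blast
  qed
  moreover have "L / 2 * X = L / 2 * t - L / 2 * T" unfolding t_def by (simp add: distrib_left)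
  ultimately have "F t \<le> F T + L / 2 * X" unfolding K_def by linarith
  then have "F t \<le> F T - (\<bar>F T\<bar> + \<bar>\<alpha>\<bar> + 2)" using LX by linarith
  moreover have "F t > \<alpha> - 1" using N[of t] Xpos unfolding t_def T_def by simp
  ultimately show False by (simp add: abs_if split: if_splits)
qed

end
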